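(* Let $H$ be a complex Hilbert space, $\varphi,\psi:[0,1]\to\mathbb{R}$ continuous, $A\in\mathbb{B}(H)$ and $t\in[0,1]$. Then $$\omega_t^2(\varphi,\psi;A)\le\frac12\big(|\varphi(t)|^2+|\psi(t)|^2\big)\|A^*A+AA^*\|+|\varphi(t)\psi(t)|\,\omega\big(A^2+(A^* )^2\big).$$
   Context: $S_1(H)$ is the unit sphere of $H$, $\omega(T)=\sup_{x\in S_1(H)}|\langle Tx,x\rangle|$, and $\omega_t(\varphi,\psi;A)=\sup_{x\in S_1(H)}|\langle(\varphi(t)A+\psi(t)A^* )x,x\rangle|$. *)

theory Defs
  imports "HOL-Analysis.Analysis"
begin

class complex_hilbert = real_normed_vector + complete_space +
  fixes scaleC :: "complex \<Rightarrow> 'a \<Rightarrow> 'a"  (infixr \<open>*\<^sub>C\<close> 75)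
    and cinner :: "'a \<Rightarrow> 'a \<Rightarrow> complex"
  assumes scaleC_add_right: "a *\<^sub>C (x + y) = a *\<^sub>C x + a *\<^sub>C y"
    and scaleC_add_left: "(a + b) *\<^sub>C x = a *\<^sub>C x + b *\<^sub>C x"
    and scaleC_scaleC: "a *\<^sub>C (b *\<^sub>C x) = (a * b) *\<^sub>C x"
    and scaleC_one: "1 *\<^sub>C x = x"
    and scaleC_of_real: "complex_of_real r *\<^sub>C x = r *\<^sub>R x"
    and cinner_add_left: "cinner (x + y) z = cinner x z + cinner y z"
    and cinner_scaleC_left: "cinner (a *\<^sub>C x) y = a * cinner x y"
    and cinner_commute: "cinner y x = cnj (cinner x y)"
    and cinner_self_norm: "cinner x x = complex_of_real ((norm x)\<^sup>2)"

definition bounded_op :: "('a::complex_hilbert \<Rightarrow> 'a) \<Rightarrow> bool" where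
  "bounded_op A \<longleftrightarrow> (\<forall>x y. A (x + y) = A x + A y) \<and> (\<forall>c x. A (c *\<^sub>C x) = c *\<^sub>C A x)
     \<and> (\<exists>K. \<forall>x. norm (A x) \<le> norm x * K)"

definition adj :: "('a::complex_hilbert \<Rightarrow> 'a) \<Rightarrow> 'a \<Rightarrow> 'a" where
  "adj A = (THE B. \<forall>x y. cinner (A x) y = cinner x (B y))"

definition numrad :: "('a::complex_hilbert \<Rightarrow> 'a) \<Rightarrow> real" where
  "numrad T = (SUP x\<in>{x. norm x = 1}. cmod (cinner (T x) x))"

definition omega_t :: "(real \<Rightarrow> real) \<Rightarrow> (real \<Rightarrow> real) \<Rightarrow> ('a::complex_hilbert \<Rightarrow> 'a) \<Rightarrow> real \<Rightarrow> real" where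
  "omega_t \<phi> \<psi> A t = (SUP x\<in>{x. norm x = 1}.
      cmod (cinner (complex_of_real (\<phi> t) *\<^sub>C A x + complex_of_real (\<psi> t) *\<^sub>C adj A x) x))"

end

theory Submission
  imports Defs
begin



lemma cinner_zero_left[simp]: "cinner (0::'a::complex_hilbert) y = 0"
  using cinner_add_left[of "0::'a" 0 y] by simp

lemma cinner_zero_right[simp]: "cinner (x::'a::complex_hilbert) 0 = 0"
  by (subst cinner_commute) simp

lemma cinner_add_right: "cinner (x::'a::complex_hilbert) (y + z) = cinner x y + cinner x z"
  by (subst (1 2 3) cinner_commute) (simp add: cinner_add_left)

lemma cinner_minus_left[simp]: "cinner (- x::'a::complex_hilbert) y = - cinner x y"
  using cinner_add_left[of x "-x" y] by (simp add: add_eq_0_iff)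

lemma cinner_minus_right[simp]: "cinner (x::'a::complex_hilbert) (- y) = - cinner x y"
  by (subst (1 2) cinner_commute) simp

lemma cinner_diff_left: "cinner (x - y::'a::complex_hilbert) z = cinner x z - cinner y z"
  using cinner_add_left[of x "-y" z] by simp

lemma cinner_diff_right: "cinner (x::'a::complex_hilbert) (y - z) = cinner x y - cinner x z"
  using cinner_add_right[of x y "-z"] by simp

lemma cinner_scaleC_right: "cinner (x::'a::complex_hilbert) (a *\<^sub>C y) = cnj a * cinner x y"
  by (subst (1 2) cinner_commute) (simp add: cinner_scaleC_left)

lemma scaleR_as_scaleC: "r *\<^sub>R (x::'a::complex_hilbert) = complex_of_real r *\<^sub>C x"
  by (simp add: scaleC_of_real)

lemma cinner_scaleR_left: "cinner (r *\<^sub>R x::'a::complex_hilbert) y = of_real r * cinner x y"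
  by (simp add: scaleR_as_scaleC cinner_scaleC_left)

lemma cinner_scaleR_right: "cinner (x::'a::complex_hilbert) (r *\<^sub>R y) = of_real r * cinner x y"
  by (simp add: scaleR_as_scaleC cinner_scaleC_right)

lemma cinner_self: "cinner (x::'a::complex_hilbert) x = of_real ((norm x)\<^sup>2)"
  by (rule cinner_self_norm)

lemma cinner_cnj_swap: "cnj (cinner (x::'a::complex_hilbert) y) = cinner y x"
  by (simp add: cinner_commute[of y x])

lemma ring_aux: "(c::complex) * (c * X) - c * (d * b) - (b * (c * d) - b * (d * c)) = c * (c * X - b * d)"
  by (simp add: algebra_simps)

lemma cauchy_schwarz: "cmod (cinner (x::'a::complex_hilbert) y) \<le> norm x * norm y"
proof (cases "y = 0")
  case True then show ?thesis by simp
next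
  case False
  define n where "n = (norm y)\<^sup>2"
  define b where "b = cinner x y"
  have n0: "n > 0" using False by (simp add: n_def)
  define v where "v = n *\<^sub>R x - b *\<^sub>C y"
  have yy: "cinner y y = of_real n" by (simp add: cinner_self n_def)
  have yx: "cinner y x = cnj b" by (simp add: b_def cinner_cnj_swap)
  have "cinner v v = of_real n * (of_real n * cinner x x) - of_real n * (cnj b * cinner x y)
      - (b * (of_real n * cinner y x) - b * (cnj b * cinner y y))"
    unfolding v_def
    by (simp only: cinner_diff_left cinner_diff_right cinner_scaleC_left cinner_scaleC_right
        cinner_scaleR_left cinner_scaleR_right; simp add: algebra_simps)
  also have "\<dots> = of_real n * (of_real n * cinner x x) - of_real n * (cnj b * b)
      - (b * (of_real n * cnj b) - b * (cnj b * of_real n))"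
    by (simp only: yy yx flip: b_def)
  also have "\<dots> = of_real n * (of_real n * cinner x x - b * cnj b)"
    by (rule ring_aux)
  finally have "cinner v v = of_real n * (of_real n * cinner x x - b * cnj b)" .
  moreover have "b * cnj b = of_real ((cmod b)\<^sup>2)" by (rule complex_norm_square[symmetric])
  ultimately have "cinner v v = of_real (n * (n * (norm x)\<^sup>2 - (cmod b)\<^sup>2))"
    by (simp add: cinner_self)
  then have "complex_of_real (n * (n * (norm x)\<^sup>2 - (cmod b)\<^sup>2)) = of_real ((norm v)\<^sup>2)"
    by (simp only: cinner_self)
  then have "n * (n * (norm x)\<^sup>2 - (cmod b)\<^sup>2) = (norm v)\<^sup>2"
    by (simp only: of_real_eq_iff)
  then have "0 \<le> n * (n * (norm x)\<^sup>2 - (cmod b)\<^sup>2)" by simp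
  then have "(cmod b)\<^sup>2 \<le> n * (norm x)\<^sup>2" using n0 by (simp add: zero_le_mult_iff)
  then have "(cmod b)\<^sup>2 \<le> (norm x * norm y)\<^sup>2" by (simp add: n_def power_mult_distrib mult.commute)
  then show ?thesis unfolding b_def
    by (meson norm_ge_zero power2_le_imp_le zero_le_mult_iff)
qed


lemma norm_sq_Re: "(norm (x::'a::complex_hilbert))\<^sup>2 = Re (cinner x x)"
  by (simp add: cinner_self)

lemma Re_cinner_sym: "Re (cinner (x::'a::complex_hilbert) y) = Re (cinner y x)"
  by (subst cinner_commute) simp

lemma cinner_ext:
  assumes "\<And>z. cinner z u = cinner z (v::'a::complex_hilbert)"
  shows "u = v"
proof -
  have "cinner (u - v) (u - v) = 0"
    by (simp add: cinner_diff_right assms)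
  then have "(norm (u - v))\<^sup>2 = 0" by (simp add: norm_sq_Re)
  then show ?thesis by simp
qed

lemma norm_diff_scaleR_sq:
  "(norm (x - s *\<^sub>R m))\<^sup>2 = (norm (x::'a::complex_hilbert))\<^sup>2 - 2 * s * Re (cinner m x) + s\<^sup>2 * (norm m)\<^sup>2"
proof -
  have "(norm (x - s *\<^sub>R m))\<^sup>2 = Re (cinner x x) - s * Re (cinner x m) - s * Re (cinner m x)
      + s * s * Re (cinner m m)"
    by (simp add: algebra_simps norm_sq_Re cinner_diff_left cinner_diff_right cinner_scaleR_left cinner_scaleR_right)
  then show ?thesis
    by (simp add: cinner_self Re_cinner_sym[of x m] power2_eq_square)
qed

lemma parallelogram:
  "(norm (x + y))\<^sup>2 + (norm (x - y))\<^sup>2 = 2 * (norm (x::'a::complex_hilbert))\<^sup>2 + 2 * (norm y)\<^sup>2"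
  by (simp add: norm_sq_Re cinner_diff_left cinner_diff_right cinner_add_left cinner_add_right)


lemma riesz:
  fixes f :: "'a::complex_hilbert \<Rightarrow> complex"
  assumes fadd: "\<And>x y. f (x + y) = f x + f y"
    and fsc: "\<And>c x. f (c *\<^sub>C x) = c * f x"
    and fbd: "\<And>x. cmod (f x) \<le> norm x * K"
  shows "\<exists>w. \<forall>x. f x = cinner x w"
proof (cases "\<forall>x. f x = 0")
  case True then show ?thesis by (intro exI[of _ 0]) simp
next
  case False
  then obtain u where u: "f u \<noteq> 0" by auto
  have fR: "f (r *\<^sub>R x) = r *\<^sub>R f x" for r x
    by (simp add: scaleR_as_scaleC fsc scaleR_conv_of_real)
  have blf: "bounded_linear f"
    by (rule bounded_linear_intro[OF fadd fR]) (rule fbd)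
  have f0: "f 0 = 0" using fR[of 0 0] by simp
  have fdiff: "f (x - y) = f x - f y" for x y
    using fadd[of x "-y"] fR[of "-1" y] by simp
  define S where "S = {x. f x = 1}"
  define c where "c = Inf (norm ` S)"
  have u1: "(1 / f u) *\<^sub>C u \<in> S" using u by (simp add: S_def fsc)
  have Sne: "norm ` S \<noteq> {}" using u1 by auto
  have bdd: "bdd_below (norm ` S)" by (rule bdd_belowI[of _ 0]) auto
  have c_le: "c \<le> norm x" if "x \<in> S" for x unfolding c_def using that bdd by (simp add: cInf_lower)
  have c0: "0 \<le> c" unfolding c_def by (rule cInf_greatest[OF Sne]) auto
  have "\<exists>x\<in>S. norm x < c + inverse (real (Suc n))" for n
  proof -
    have "Inf (norm ` S) < c + inverse (real (Suc n))" unfolding c_def by simp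
    then show ?thesis using cInf_less_iff[OF Sne bdd] by auto
  qed
  then obtain X where XS: "\<And>n. X n \<in> S" and Xn: "\<And>n. norm (X n) < c + inverse (real (Suc n))"
    by metis
  have fX: "f (X n) = 1" for n using XS[of n] by (simp add: S_def)
  have est: "(norm (X m - X n))\<^sup>2 \<le> 2 * (norm (X m))\<^sup>2 + 2 * (norm (X n))\<^sup>2 - 4 * c\<^sup>2" for m n
  proof -
    have "(1/2) *\<^sub>R (X m + X n) \<in> S" by (simp add: S_def fR fadd fX scaleR_conv_of_real)
    then have "c \<le> norm ((1/2) *\<^sub>R (X m + X n))" by (rule c_le)
    then have "2 * c \<le> norm (X m + X n)" by simp
    then have "(2 * c)\<^sup>2 \<le> (norm (X m + X n))\<^sup>2" using c0 by (intro power_mono) auto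
    then have "4 * c\<^sup>2 \<le> (norm (X m + X n))\<^sup>2" by (simp add: power_mult_distrib)
    then show ?thesis using parallelogram[of "X m" "X n"] by linarith
  qed
  define k where "k = 2 * c + 1"
  have k0: "k > 0" using c0 by (simp add: k_def)
  have sq_bound: "(norm (X n))\<^sup>2 \<le> c\<^sup>2 + k * inverse (real (Suc n))" for n
  proof -
    define d where "d = inverse (real (Suc n))"
    have d0: "0 < d" "d \<le> 1" by (auto simp: d_def field_simps)
    have "(norm (X n))\<^sup>2 \<le> (c + d)\<^sup>2" using Xn[of n] by (intro power_mono) (auto simp: d_def)
    also have "\<dots> = c\<^sup>2 + (2*c + d) * d" by (simp add: power2_eq_square algebra_simps)
    also have "\<dots> \<le> c\<^sup>2 + k * d" unfolding k_def using d0 by (intro add_left_mono mult_right_mono) auto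
    finally show ?thesis by (simp add: d_def)
  qed
  have "Cauchy X"
  proof (rule metric_CauchyI)
    fix e :: real assume e: "0 < e"
    have "0 < e\<^sup>2 / (4 * k)" using e k0 by simp
    then obtain M where M: "inverse (real (Suc M)) < e\<^sup>2 / (4 * k)" using reals_Archimedean by blast
    show "\<exists>M. \<forall>m\<ge>M. \<forall>n\<ge>M. dist (X m) (X n) < e"
    proof (intro exI allI impI)
      fix m n assume mM: "M \<le> m" and nM: "M \<le> n"
      have im: "inverse (real (Suc m)) \<le> inverse (real (Suc M))" using mM by (simp add: field_simps)
      have in': "inverse (real (Suc n)) \<le> inverse (real (Suc M))" using nM by (simp add: field_simps)
      have "(norm (X m - X n))\<^sup>2 \<le> 2 * k * (inverse (real (Suc m)) + inverse (real (Suc n)))"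
        using est[of m n] sq_bound[of m] sq_bound[of n] by (simp add: algebra_simps)
      also have "\<dots> \<le> 2 * k * (2 * inverse (real (Suc M)))"
        by (intro mult_left_mono) (use im in' k0 in linarith)+
      also have "\<dots> = 4 * k * inverse (real (Suc M))" by simp
      also have "\<dots> < 4 * k * (e\<^sup>2 / (4 * k))"
        by (rule mult_strict_left_mono[OF M]) (use k0 in simp)
      also have "\<dots> = e\<^sup>2" using k0 by simp
      finally have "(norm (X m - X n))\<^sup>2 < e\<^sup>2" .
      then have "norm (X m - X n) < e" by (rule power_less_imp_less_base) (use e in linarith)
      then show "dist (X m) (X n) < e" by (simp add: dist_norm)
    qed
  qed
  then obtain x0 where lim: "X \<longlonglongrightarrow> x0" using Cauchy_convergent convergent_def by blast
  have "(\<lambda>n. f (X n)) \<longlonglongrightarrow> f x0" by (rule bounded_linear.tendsto[OF blf lim])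
  then have fx0: "f x0 = 1" by (simp add: fX LIMSEQ_const_iff)
  have "norm x0 \<le> c"
    by (rule LIMSEQ_le[OF tendsto_norm[OF lim] LIMSEQ_inverse_real_of_nat_add[of c]])
      (use Xn less_imp_le in blast)
  then have mini: "norm x0 \<le> norm y" if "f y = 1" for y using c_le[of y] that by (simp add: S_def)
  have orth: "cinner m x0 = 0" if fm: "f m = 0" for m
  proof (rule ccontr)
    assume ne: "cinner m x0 \<noteq> 0"
    define g where "g = cinner m x0"
    define m' where "m' = cnj g *\<^sub>C m"
    have fm': "f m' = 0" by (simp add: m'_def fsc fm)
    define r where "r = (cmod g)\<^sup>2"
    have r0: "r > 0" using ne by (simp add: r_def g_def)
    have "cinner m' x0 = of_real r"
      unfolding m'_def cinner_scaleC_left r_def complex_norm_square g_def[symmetric] by (simp add: mult.commute)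
    then have Rer: "Re (cinner m' x0) = r" by simp
    define MM where "MM = (norm m')\<^sup>2"
    have MM0: "MM \<ge> 0" by (simp add: MM_def)
    define s where "s = r / (MM + 1)"
    have s0: "s > 0" using r0 MM0 by (simp add: s_def)
    have sM: "s * MM < r" using r0 MM0 by (simp add: s_def field_simps)
    define y where "y = x0 - s *\<^sub>R m'"
    have "f y = 1" by (simp add: y_def fdiff fR fm' fx0)
    then have "norm x0 \<le> norm y" by (rule mini)
    then have "(norm x0)\<^sup>2 \<le> (norm y)\<^sup>2" by (intro power_mono) auto
    also have "(norm y)\<^sup>2 = (norm x0)\<^sup>2 - 2 * s * r + s\<^sup>2 * MM"
      by (simp add: y_def norm_diff_scaleR_sq Rer MM_def)
    finally have "0 \<le> s * (s * MM - 2 * r)" by (simp add: power2_eq_square algebra_simps)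
    then have "0 \<le> s * MM - 2 * r" using s0 by (simp add: zero_le_mult_iff)
    then show False using sM r0 by linarith
  qed
  define N where "N = (norm x0)\<^sup>2"
  have x0ne: "x0 \<noteq> 0" using fx0 f0 by auto
  then have N0: "N > 0" by (simp add: N_def)
  show ?thesis
  proof (intro exI allI)
    fix x
    have "f (x - f x *\<^sub>C x0) = 0" by (simp add: fdiff fsc fx0)
    then have "cinner (x - f x *\<^sub>C x0) x0 = 0" by (rule orth)
    then have cx: "cinner x x0 = f x * of_real N"
      by (simp add: cinner_diff_left cinner_scaleC_left cinner_self N_def)
    have "cinner x ((1 / N) *\<^sub>R x0) = of_real (1 / N) * (f x * of_real N)"
      by (simp add: cinner_scaleR_right cx)
    also have "\<dots> = f x" using N0 by (simp add: field_simps)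
    finally show "f x = cinner x ((1 / N) *\<^sub>R x0)" by simp
  qed
qed



lemma norm_add_scaleR_sq:
  "(norm (a *\<^sub>R u + b *\<^sub>R v))\<^sup>2 = a\<^sup>2 * (norm (u::'a::complex_hilbert))\<^sup>2 + b\<^sup>2 * (norm v)\<^sup>2 + 2 * a * b * Re (cinner u v)"
proof -
  have "(norm (a *\<^sub>R u + b *\<^sub>R v))\<^sup>2 = a * a * Re (cinner u u) + a * b * Re (cinner u v) + b * a * Re (cinner v u)
      + b * b * Re (cinner v v)"
    by (simp add: algebra_simps norm_sq_Re cinner_add_left cinner_add_right cinner_scaleR_left cinner_scaleR_right)
  then show ?thesis
    by (simp add: cinner_self Re_cinner_sym[of v u] power2_eq_square algebra_simps)
qed

lemma bounded_op_facts:
  assumes "bounded_op (A::'a::complex_hilbert \<Rightarrow> 'a)"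
  obtains K where "\<And>x y. A (x + y) = A x + A y" "\<And>c x. A (c *\<^sub>C x) = c *\<^sub>C A x"
    "\<And>x. norm (A x) \<le> norm x * K" "K \<ge> 0"
proof -
  from assms obtain K where a: "\<And>x y. A (x + y) = A x + A y" "\<And>c x. A (c *\<^sub>C x) = c *\<^sub>C A x"
    "\<And>x. norm (A x) \<le> norm x * K" unfolding bounded_op_def by blast
  have "norm (A x) \<le> norm x * max K 0" for x
    using a(3)[of x] by (smt (verit) mult_left_mono norm_ge_zero)
  then show ?thesis using that[OF a(1,2)] by fastforce
qed

lemma adj_prop:
  assumes "bounded_op (A::'a::complex_hilbert \<Rightarrow> 'a)"
  shows "cinner (A x) y = cinner x (adj A y)"
proof -
  obtain K where Aadd: "\<And>x y. A (x + y) = A x + A y" and Asc: "\<And>c x. A (c *\<^sub>C x) = c *\<^sub>C A x"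
    and Abd: "\<And>x. norm (A x) \<le> norm x * K" and K0: "K \<ge> 0"
    using bounded_op_facts[OF assms] by blast
  have "\<exists>w. \<forall>x. cinner (A x) y = cinner x w" for y
  proof (rule riesz)
    show "cinner (A (x + z)) y = cinner (A x) y + cinner (A z) y" for x z
      by (simp add: Aadd cinner_add_left)
    show "cinner (A (c *\<^sub>C x)) y = c * cinner (A x) y" for c x
      by (simp add: Asc cinner_scaleC_left)
    show "cmod (cinner (A x) y) \<le> norm x * (K * norm y)" for x
    proof -
      have "cmod (cinner (A x) y) \<le> norm (A x) * norm y" by (rule cauchy_schwarz)
      also have "\<dots> \<le> norm x * K * norm y" by (intro mult_right_mono Abd) simp
      finally show ?thesis by (simp add: mult.assoc)
    qed
  qed
  then obtain B where B: "\<And>y x. cinner (A x) y = cinner x (B y)" by metis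
  have "adj A = B"
    unfolding adj_def
  proof (rule the_equality)
    show "\<forall>x y. cinner (A x) y = cinner x (B y)" using B by blast
    fix B' assume "\<forall>x y. cinner (A x) y = cinner x (B' y)"
    then show "B' = B" by (intro ext cinner_ext) (simp add: B)
  qed
  then show ?thesis by (simp add: B)
qed


theorem theorem3p9:
  fixes A :: "'a::complex_hilbert \<Rightarrow> 'a"
    and \<phi> \<psi> :: "real \<Rightarrow> real" and t :: real
  assumes "\<exists>x::'a. x \<noteq> 0"
    and "continuous_on {0..1} \<phi>" and "continuous_on {0..1} \<psi>"
    and "bounded_op A"
    and "t \<in> {0..1}"
  shows "(omega_t \<phi> \<psi> A t)\<^sup>2 \<le>
     1/2 * (\<bar>\<phi> t\<bar>\<^sup>2 + \<bar>\<psi> t\<bar>\<^sup>2) * onorm (\<lambda>x. adj A (A x) + A (adj A x))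
     + \<bar>\<phi> t * \<psi> t\<bar> * numrad (\<lambda>x. A (A x) + adj A (adj A x))"
proof -
  note bop = assms(4)
  obtain K where Aadd: "\<And>x y. A (x + y) = A x + A y" and Asc: "\<And>c x. A (c *\<^sub>C x) = c *\<^sub>C A x"
    and Abd: "\<And>x. norm (A x) \<le> norm x * K" and K0: "K \<ge> 0"
    using bounded_op_facts[OF bop] by blast
  define B where "B = adj A"
  have adjB: "cinner (A x) y = cinner x (B y)" for x y unfolding B_def by (rule adj_prop[OF bop])
  have adjB2: "cinner (B x) y = cinner x (A y)" for x y
    by (subst (1 2) cinner_commute) (simp add: adjB)
  have AR: "A (r *\<^sub>R x) = r *\<^sub>R A x" for r x by (simp add: scaleR_as_scaleC Asc)
  have Badd: "B (x + y) = B x + B y" for x y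
    by (rule cinner_ext[symmetric]) (simp add: adjB[symmetric] cinner_add_right)
  have BR: "B (r *\<^sub>R x) = r *\<^sub>R B x" for r x
    by (rule cinner_ext[symmetric]) (simp add: adjB[symmetric] cinner_scaleR_right)
  have Bbd: "norm (B y) \<le> norm y * K" for y
  proof (cases "norm (B y) = 0")
    case True then show ?thesis using K0 by simp
  next
    case False
    have "(norm (B y))\<^sup>2 = Re (cinner (A (B y)) y)" by (simp add: norm_sq_Re adjB)
    also have "\<dots> \<le> cmod (cinner (A (B y)) y)" by (rule complex_Re_le_cmod)
    also have "\<dots> \<le> norm (A (B y)) * norm y" by (rule cauchy_schwarz)
    also have "\<dots> \<le> norm (B y) * K * norm y" by (intro mult_right_mono Abd) simp
    finally have "norm (B y) * norm (B y) \<le> norm (B y) * (norm y * K)"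
      by (simp add: power2_eq_square mult_ac)
    then show ?thesis using False by (simp add: mult_le_cancel_left)
  qed
  have blA: "bounded_linear A" by (rule bounded_linear_intro[OF Aadd AR Abd])
  have blB: "bounded_linear B" by (rule bounded_linear_intro[OF Badd BR Bbd])
  define D where "D = (\<lambda>x. B (A x) + A (B x))"
  define C where "C = (\<lambda>x. A (A x) + B (B x))"
  have blD: "bounded_linear D" unfolding D_def
    by (intro bounded_linear_add bounded_linear_compose[OF blB blA] bounded_linear_compose[OF blA blB])
  have blC: "bounded_linear C" unfolding C_def
    by (intro bounded_linear_add bounded_linear_compose[OF blA blA] bounded_linear_compose[OF blB blB])
  define U where "U = {x::'a. norm x = 1}"
  have bddC: "bdd_above ((\<lambda>x. cmod (cinner (C x) x)) ` U)"
  proof (rule bdd_aboveI2)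
    fix x assume "x \<in> U"
    then have "norm x = 1" by (simp add: U_def)
    have "cmod (cinner (C x) x) \<le> norm (C x) * norm x" by (rule cauchy_schwarz)
    also have "\<dots> \<le> onorm C * norm x * norm x" by (intro mult_right_mono onorm[OF blC]) simp
    finally show "cmod (cinner (C x) x) \<le> onorm C" using \<open>norm x = 1\<close> by simp
  qed
  define a where "a = \<phi> t"
  define b where "b = \<psi> t"
  define R where "R = 1/2 * (\<bar>a\<bar>\<^sup>2 + \<bar>b\<bar>\<^sup>2) * onorm D + \<bar>a * b\<bar> * numrad C"
  define w where "w = (\<lambda>x. cmod (cinner (complex_of_real a *\<^sub>C A x + complex_of_real b *\<^sub>C B x) x))"
  have key: "(w x)\<^sup>2 \<le> R" if xU: "x \<in> U" for x
  proof -
    have nx: "norm x = 1" using xU by (simp add: U_def)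
    define p where "p = (norm (A x))\<^sup>2"
    define q where "q = (norm (B x))\<^sup>2"
    define r where "r = Re (cinner (A x) (B x))"
    define T where "T = a *\<^sub>R A x + b *\<^sub>R B x"
    define S where "S = a *\<^sub>R B x + b *\<^sub>R A x"
    have wT: "w x = cmod (cinner T x)" by (simp add: w_def T_def scaleC_of_real)
    have wS: "cinner T x = cinner x S"
      by (simp add: T_def S_def cinner_add_left cinner_add_right cinner_scaleR_left
          cinner_scaleR_right adjB adjB2)
    have "w x \<le> norm T" using cauchy_schwarz[of T x] nx wT by simp
    then have w1: "(w x)\<^sup>2 \<le> (norm T)\<^sup>2" by (intro power_mono) (auto simp: wT)
    have "w x \<le> norm S" using cauchy_schwarz[of x S] nx wT wS by simp
    then have w2: "(w x)\<^sup>2 \<le> (norm S)\<^sup>2" by (intro power_mono) (auto simp: wT)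
    have nT: "(norm T)\<^sup>2 = a\<^sup>2 * p + b\<^sup>2 * q + 2 * a * b * r"
      unfolding T_def norm_add_scaleR_sq p_def q_def r_def Re_cinner_sym[of "B x" "A x"] by simp
    have nS: "(norm S)\<^sup>2 = a\<^sup>2 * q + b\<^sup>2 * p + 2 * a * b * r"
      unfolding S_def norm_add_scaleR_sq p_def q_def r_def Re_cinner_sym[of "B x" "A x"] by simp
    have "cinner (D x) x = cinner (A x) (A x) + cinner (B x) (B x)"
      by (simp add: D_def cinner_add_left adjB adjB2)
    then have "p + q = Re (cinner (D x) x)" by (simp add: p_def q_def norm_sq_Re)
    also have "\<dots> \<le> cmod (cinner (D x) x)" by (rule complex_Re_le_cmod)
    also have "\<dots> \<le> norm (D x) * norm x" by (rule cauchy_schwarz)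
    also have "\<dots> \<le> onorm D * norm x * norm x" by (intro mult_right_mono onorm[OF blD]) simp
    finally have pq: "p + q \<le> onorm D" using nx by simp
    have "cinner (C x) x = cinner (A x) (B x) + cinner (B x) (A x)"
      by (simp add: C_def cinner_add_left adjB adjB2)
    then have "\<bar>2 * r\<bar> = \<bar>Re (cinner (C x) x)\<bar>" by (simp add: r_def Re_cinner_sym[of "B x" "A x"])
    also have "\<dots> \<le> cmod (cinner (C x) x)" by (rule abs_Re_le_cmod)
    also have "\<dots> \<le> numrad C" unfolding numrad_def U_def[symmetric] by (rule cSUP_upper[OF xU bddC])
    finally have r2: "\<bar>2 * r\<bar> \<le> numrad C" .
    have "2 * (w x)\<^sup>2 \<le> (a\<^sup>2 + b\<^sup>2) * (p + q) + 2 * (a * b) * (2 * r)"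
      using w1 w2 nT nS by (simp add: algebra_simps)
    also have "\<dots> \<le> (a\<^sup>2 + b\<^sup>2) * onorm D + 2 * \<bar>a * b\<bar> * numrad C"
    proof (intro add_mono)
      show "(a\<^sup>2 + b\<^sup>2) * (p + q) \<le> (a\<^sup>2 + b\<^sup>2) * onorm D" using pq by (intro mult_left_mono) auto
      have "(a * b) * (2 * r) \<le> \<bar>a * b\<bar> * \<bar>2 * r\<bar>" by (metis abs_ge_self abs_mult)
      also have "\<dots> \<le> \<bar>a * b\<bar> * numrad C" using r2 by (intro mult_left_mono) auto
      finally show "2 * (a * b) * (2 * r) \<le> 2 * \<bar>a * b\<bar> * numrad C" by (simp add: algebra_simps)
    qed
    finally show ?thesis by (simp add: R_def)
  qed
  obtain x1 :: 'a where "x1 \<noteq> 0" using assms(1) by blast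
  define u where "u = (1 / norm x1) *\<^sub>R x1"
  have uU: "u \<in> U" using \<open>x1 \<noteq> 0\<close> by (simp add: U_def u_def)
  have R0: "R \<ge> 0" using key[OF uU] by (meson order_trans zero_le_power2)
  have wle: "w x \<le> sqrt R" if "x \<in> U" for x
    using key[OF that] by (metis real_le_rsqrt)
  have om: "omega_t \<phi> \<psi> A t = (SUP x\<in>U. w x)"
    by (simp add: omega_t_def U_def w_def a_def b_def B_def)
  have Une: "U \<noteq> {}" using uU by blast
  have o1: "omega_t \<phi> \<psi> A t \<le> sqrt R" unfolding om by (rule cSUP_least[OF Une wle])
  have bddw: "bdd_above (w ` U)" by (rule bdd_aboveI2[OF wle])
  have "w u \<le> omega_t \<phi> \<psi> A t" unfolding om by (rule cSUP_upper[OF uU bddw])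
  then have o0: "0 \<le> omega_t \<phi> \<psi> A t" using w_def by (metis norm_ge_zero order_trans)
  have "(omega_t \<phi> \<psi> A t)\<^sup>2 \<le> (sqrt R)\<^sup>2" using o0 o1 by (intro power_mono)
  also have "\<dots> = R" using R0 by simp
  finally show ?thesis by (simp add: R_def a_def b_def D_def C_def B_def)
qed

end
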